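(* Let $V_1\subseteq\mathbb{Z}^2$ be infinite and connected with $V_1^c=\mathbb{Z}^2\setminus V_1$ infinite and connected. Let $F=\{\{x,y\}\in\mathcal{E}^2:x\in V_1,y\in V_1^c\}$ be its edge boundary and $F^*$ the set of dual edges of edges in $F$. Then $F^*$ consists of a single doubly infinite dual path which is non-self-intersecting: writing $W^*$ for the set of endpoints of dual edges in $F^*$, the graph $G^*=(W^*,F^* )$ is connected and infinite, and every $v^*\in W^*$ has degree exactly $2$ in $G^*$.
   Context: Connectedness of subsets of $\mathbb{Z}^2$ is with respect to the nearest-neighbour lattice $(\mathbb{Z}^2,\mathcal{E}^2)$. The dual lattice has vertex set $\mathbb{Z}^2+(1/2,1/2)$ and edge set $\mathcal{E}^2+(1/2,1/2)$; the dual edge $e^*$ of $e\in\mathcal{E}^2$ is the unique dual edge bisecting $e$. *)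

theory Defs
  imports Main "HOL.Real"
begin

definition graph_connected :: "'a set \<Rightarrow> 'a set set \<Rightarrow> bool" where
  "graph_connected W F \<longleftrightarrow>
     (\<forall>x\<in>W. \<forall>y\<in>W. \<exists>p. p \<noteq> [] \<and> hd p = x \<and> last p = y \<and> set p \<subseteq> W \<and>
        (\<forall>i. Suc i < length p \<longrightarrow> {p ! i, p ! Suc i} \<in> F))"

definition graph_degree :: "'a set set \<Rightarrow> 'a \<Rightarrow> nat" where
  "graph_degree F v = card {e \<in> F. v \<in> e}"

definition E2 :: "(int \<times> int) set set" where
  "E2 = {{x, y} | x y. \<bar>fst x - fst y\<bar> + \<bar>snd x - snd y\<bar> = 1}"

definition lattice_connected :: "(int \<times> int) set \<Rightarrow> bool" where
  "lattice_connected V = graph_connected V {e \<in> E2. e \<subseteq> V}"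

definition dual_vertices :: "(real \<times> real) set" where
  "dual_vertices = {(of_int a + 1/2, of_int b + 1/2) | a b. True}"

definition E2_dual :: "(real \<times> real) set set" where
  "E2_dual = (\<lambda>e. (\<lambda>(u, v). (u + 1/2, v + 1/2)) ` e) ` ((\<lambda>e. (\<lambda>(a, b). (real_of_int a, real_of_int b)) ` e) ` E2)"

text \<open>The dual edge of the lattice edge {x,y}: the dual edge bisecting it, i.e. the
  segment through the midpoint m = (x+y)/2 in direction perpendicular to y - x,
  with endpoints m \<plusminus> rot90(y - x)/2.\<close>

definition dual_edge_of :: "int \<times> int \<Rightarrow> int \<times> int \<Rightarrow> (real \<times> real) set" where
  "dual_edge_of x y =
     (let mx = (real_of_int (fst x) + real_of_int (fst y)) / 2;
          my = (real_of_int (snd x) + real_of_int (snd y)) / 2;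
          dx = real_of_int (fst y) - real_of_int (fst x);
          dy = real_of_int (snd y) - real_of_int (snd x)
      in {(mx - dy / 2, my + dx / 2), (mx + dy / 2, my - dx / 2)})"

definition dual_edge :: "(int \<times> int) set \<Rightarrow> (real \<times> real) set" where
  "dual_edge e = (THE d. \<exists>x y. e = {x, y} \<and> d = dual_edge_of x y)"

definition edge_boundary :: "(int \<times> int) set \<Rightarrow> (int \<times> int) set set" where
  "edge_boundary V1 = {{x, y} | x y. {x, y} \<in> E2 \<and> x \<in> V1 \<and> y \<notin> V1}"

end

theory Submission
  imports Defs
begin


definition adj :: "int\<times>int \<Rightarrow> int\<times>int \<Rightarrow> bool" where
  "adj u v \<longleftrightarrow> \<bar>fst u - fst v\<bar> + \<bar>snd u - snd v\<bar> = 1"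

definition hE :: "int \<Rightarrow> int \<Rightarrow> (int\<times>int) set" where "hE i j = {(i,j),(i+1,j)}"
definition vE :: "int \<Rightarrow> int \<Rightarrow> (int\<times>int) set" where "vE i j = {(i,j),(i,j+1)}"

lemma hE_eq[simp]: "hE a b = hE c d \<longleftrightarrow> a = c \<and> b = d"
  unfolding hE_def by (auto simp: doubleton_eq_iff)
lemma vE_eq[simp]: "vE a b = vE c d \<longleftrightarrow> a = c \<and> b = d"
  unfolding vE_def by (auto simp: doubleton_eq_iff)
lemma hE_vE[simp]: "hE a b \<noteq> vE c d" "vE c d \<noteq> hE a b"
  unfolding vE_def hE_def by (auto simp: doubleton_eq_iff)

lemma adj_sym: "adj u v \<longleftrightarrow> adj v u"
  unfolding adj_def by arith

lemma adj_cases: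
  assumes "adj u v"
  obtains x y where "u = (x,y)" "v = (x+1,y)" | x y where "u = (x+1,y)" "v = (x,y)"
   | x y where "u = (x,y)" "v = (x,y+1)" | x y where "u = (x,y+1)" "v = (x,y)"
proof -
  obtain a b c d where u: "u = (a,b)" and v: "v = (c,d)" by (cases u, cases v)
  have "(c = a+1 \<and> d = b) \<or> (a = c+1 \<and> d = b) \<or> (c = a \<and> d = b+1) \<or> (c = a \<and> b = d+1)"
    using assms unfolding adj_def u v by auto
  then show ?thesis using that u v by auto
qed

lemma adj_E2: "{u,v} \<in> E2 \<longleftrightarrow> adj u v"
proof
  assume "{u,v} \<in> E2"
  then obtain x y where "{u,v} = {x,y}" "adj x y" unfolding E2_def adj_def by auto
  then show "adj u v" using adj_sym by (auto simp: doubleton_eq_iff) (meson adj_sym)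
next
  assume "adj u v" then show "{u,v} \<in> E2" unfolding E2_def adj_def by blast
qed

lemma E2_cases:
  assumes "e \<in> E2" obtains i j where "e = hE i j" | i j where "e = vE i j"
proof -
  obtain u v where e: "e = {u,v}" and a: "adj u v" using assms unfolding E2_def adj_def by auto
  show ?thesis using a
    by (cases rule: adj_cases) (auto simp: e hE_def vE_def insert_commute intro: that)
qed

lemma hE_E2[simp]: "hE i j \<in> E2" and vE_E2[simp]: "vE i j \<in> E2"
  unfolding hE_def vE_def adj_E2 adj_def by auto

definition cen :: "int\<times>int \<Rightarrow> real\<times>real" where
  "cen s = (real_of_int (fst s) + 1/2, real_of_int (snd s) + 1/2)"

lemma cen_eq[simp]: "cen s = cen t \<longleftrightarrow> s = t"
  unfolding cen_def by (auto simp: prod_eq_iff)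

lemma dual_edge_of_sym: "dual_edge_of x y = dual_edge_of y x"
  unfolding dual_edge_of_def Let_def by (auto simp: field_simps)

lemma dual_edge_pair: "dual_edge {x,y} = dual_edge_of x y"
  unfolding dual_edge_def
proof (rule the_equality)
  show "\<exists>x' y'. {x, y} = {x', y'} \<and> dual_edge_of x y = dual_edge_of x' y'" by blast
  fix d assume "\<exists>x' y'. {x, y} = {x', y'} \<and> d = dual_edge_of x' y'"
  then show "d = dual_edge_of x y" by (auto simp: doubleton_eq_iff dual_edge_of_sym)
qed

lemma dual_hE: "dual_edge (hE i j) = {cen (i,j), cen (i,j-1)}"
  unfolding hE_def dual_edge_pair dual_edge_of_def cen_def Let_def
  by (auto simp: field_simps)

lemma dual_vE: "dual_edge (vE i j) = {cen (i-1,j), cen (i,j)}"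
  unfolding vE_def dual_edge_pair dual_edge_of_def cen_def Let_def
  by (auto simp: field_simps)

definition sqE :: "int\<times>int \<Rightarrow> (int\<times>int) set set" where
  "sqE s = {hE (fst s) (snd s), vE (fst s + 1) (snd s), hE (fst s) (snd s + 1), vE (fst s) (snd s)}"

lemma cen_dual_iff:
  assumes "e \<in> E2" shows "cen s \<in> dual_edge e \<longleftrightarrow> e \<in> sqE s"
  using assms
proof (cases rule: E2_cases)
  case (1 i j) then show ?thesis
    by (cases s) (auto simp: dual_hE sqE_def)
next
  case (2 i j) then show ?thesis
    by (cases s) (auto simp: dual_vE sqE_def)
qed

lemma dual_cen:
  assumes "e \<in> E2" "w \<in> dual_edge e" shows "\<exists>s. w = cen s \<and> e \<in> sqE s"
  using assms(1)
proof (cases rule: E2_cases)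
  case (1 i j) then show ?thesis using assms cen_dual_iff by (auto simp: dual_hE sqE_def)
next
  case (2 i j) then show ?thesis using assms cen_dual_iff by (auto simp: dual_vE sqE_def)
qed

lemma dual_inj: "inj_on dual_edge E2"
proof
  fix e e' assume e: "e \<in> E2" and e': "e' \<in> E2" and eq: "dual_edge e = dual_edge e'"
  have A: "\<forall>s. e \<in> sqE s \<longleftrightarrow> e' \<in> sqE s" using cen_dual_iff[OF e] cen_dual_iff[OF e'] eq by auto
  from e show "e = e'"
  proof (cases rule: E2_cases)
    case (1 i j)
    then have "e' \<in> sqE (i,j)" "e' \<in> sqE (i,j-1)"
      using A[rule_format, of "(i,j)"] A[rule_format, of "(i,j-1)"] by (simp_all add: sqE_def)
    then have "e' = hE i j \<or> e' = vE (i+1) j \<or> e' = hE i (j+1) \<or> e' = vE i j"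
      "e' = hE i (j-1) \<or> e' = vE (i+1) (j-1) \<or> e' = hE i j \<or> e' = vE i (j-1)"
      by (simp_all add: sqE_def)
    then show ?thesis using 1 by (elim disjE) simp_all
  next
    case (2 i j)
    then have "e' \<in> sqE (i,j)" "e' \<in> sqE (i-1,j)"
      using A[rule_format, of "(i,j)"] A[rule_format, of "(i-1,j)"] by (simp_all add: sqE_def)
    then have "e' = hE i j \<or> e' = vE (i+1) j \<or> e' = hE i (j+1) \<or> e' = vE i j"
      "e' = hE (i-1) j \<or> e' = vE i j \<or> e' = hE (i-1) (j+1) \<or> e' = vE (i-1) j"
      by (simp_all add: sqE_def)
    then show ?thesis using 2 by (elim disjE) simp_all
  qed
qed

lemma dual_doubleton: assumes "e \<in> E2" shows "\<exists>a b. dual_edge e = {a,b}"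
  using assms
  by (cases rule: E2_cases) (metis dual_hE, metis dual_vE)



definition Iint :: "(int \<Rightarrow> int) \<Rightarrow> int \<Rightarrow> int" where
  "Iint c x = (\<Sum>k\<in>{0..<x}. c k) - (\<Sum>k\<in>{x..<0}. c k)"

lemma Iint_0[simp]: "Iint c 0 = 0" by (simp add: Iint_def)

lemma Iint_step: "Iint c (x+1) = Iint c x + c x"
proof (cases "x \<ge> 0")
  case True
  then have "{0..<x+1} = insert x {0..<x}" "{x+1..<0} = {}" "{x..<0} = {}" by auto
  then show ?thesis by (simp add: Iint_def)
next
  case False
  then have "{0..<x+1} = {}" "{0..<x} = {}" "{x..<0} = insert x {x+1..<0}" by auto
  then show ?thesis by (simp add: Iint_def)
qed

lemma int_all_even:
  fixes D :: "int \<Rightarrow> int"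
  assumes "even (D 0)" "\<And>y. even (D (y+1) - D y)" shows "even (D y)"
proof (induct y rule: int_induct[where k=0])
  case base then show ?case using assms(1) by simp
next
  case (step1 i) then show ?case using assms(2)[of i]
    by (metis dvd_add even_diff diff_add_cancel)
next
  case (step2 i)
  have "even (D i - D (i-1))" using assms(2)[of "i-1"] by simp
  with step2(2) have "even (D i - (D i - D (i-1)))" by (rule dvd_diff)
  then show ?case by simp
qed


lemma par3a: "even (b - a - (1::int)) \<Longrightarrow> odd a \<longleftrightarrow> even b" by presburger
lemma par3b: "even (b - (a::int)) \<Longrightarrow> odd a \<longleftrightarrow> odd b" by presburger

lemma cobound:
  fixes A :: "(int\<times>int) set set"
  assumes sq: "\<And>i j. even (of_bool (hE i j \<in> A) + of_bool (hE i (j+1) \<in> A)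
       + of_bool (vE i j \<in> A) + of_bool (vE (i+1) j \<in> A) :: int)"
  shows "\<exists>g::int\<times>int\<Rightarrow>bool. \<forall>x y. (hE x y \<in> A \<longleftrightarrow> g (x,y) \<noteq> g (x+1,y)) \<and> (vE x y \<in> A \<longleftrightarrow> g (x,y) \<noteq> g (x,y+1))"
proof -
  define gv where "gv x y = Iint (\<lambda>k. of_bool (hE k 0 \<in> A)) x + Iint (\<lambda>k. of_bool (vE x k \<in> A)) y" for x y
  have V: "gv x (y+1) = gv x y + of_bool (vE x y \<in> A)" for x y
    by (simp add: gv_def Iint_step)
  have H: "even (gv (x+1) y - gv x y - of_bool (hE x y \<in> A))" for x y
  proof (rule int_all_even[where D="\<lambda>y. gv (x+1) y - gv x y - of_bool (hE x y \<in> A)"])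
    show "even (gv (x+1) 0 - gv x 0 - of_bool (hE x 0 \<in> A))" by (simp add: gv_def Iint_step)
    fix y
    have "even (of_bool (hE x y \<in> A) + of_bool (hE x (y+1) \<in> A)
       + of_bool (vE x y \<in> A) + of_bool (vE (x+1) y \<in> A) :: int)" by (rule sq)
    then show "even (gv (x + 1) (y + 1) - gv x (y + 1) - of_bool (hE x (y + 1) \<in> A) -
          (gv (x + 1) y - gv x y - of_bool (hE x y \<in> A)))"
    proof -
      have eq: "gv (x + 1) (y + 1) - gv x (y + 1) - of_bool (hE x (y + 1) \<in> A) -
          (gv (x + 1) y - gv x y - of_bool (hE x y \<in> A)) =
          of_bool (vE (x+1) y \<in> A) - of_bool (vE x y \<in> A) - of_bool (hE x (y+1) \<in> A) + of_bool (hE x y \<in> A)"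
        by (simp add: V)
      show ?thesis unfolding eq using sq[of x y]
        by (cases "vE (x+1) y \<in> A"; cases "vE x y \<in> A"; cases "hE x (y+1) \<in> A"; cases "hE x y \<in> A") simp_all
    qed
  qed
  define g where "g p = odd (gv (fst p) (snd p))" for p
  have *: "(hE x y \<in> A \<longleftrightarrow> g (x,y) \<noteq> g (x+1,y)) \<and> (vE x y \<in> A \<longleftrightarrow> g (x,y) \<noteq> g (x,y+1))" for x y
  proof
    show "vE x y \<in> A \<longleftrightarrow> g (x,y) \<noteq> g (x,y+1)" unfolding g_def by (cases "vE x y \<in> A") (simp_all add: V)
    show "hE x y \<in> A \<longleftrightarrow> g (x,y) \<noteq> g (x+1,y)"
    proof (cases "hE x y \<in> A")
      case True
      then have "even (gv (x+1) y - gv x y - 1)" using H[of x y] by simp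
      then have "odd (gv x y) \<longleftrightarrow> even (gv (x+1) y)" by (rule par3a)
      then show ?thesis using True unfolding g_def by simp
    next
      case False
      then have "even (gv (x+1) y - gv x y)" using H[of x y] by simp
      then have "odd (gv x y) \<longleftrightarrow> odd (gv (x+1) y)" by (rule par3b)
      then show ?thesis using False unfolding g_def by simp
    qed
  qed
  then show ?thesis by blast
qed

lemma cobound_adj:
  assumes "\<forall>x y. (hE x y \<in> A \<longleftrightarrow> g (x,y) \<noteq> g (x+1,y)) \<and> (vE x y \<in> A \<longleftrightarrow> g (x,y) \<noteq> g (x,y+1))"
    and "adj u v" shows "{u,v} \<in> A \<longleftrightarrow> g u \<noteq> g v"
  using assms(2)
proof (cases rule: adj_cases)
  case (1 x y) then have "{u,v} = hE x y" by (simp add: hE_def)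
  then show ?thesis using assms(1) 1 by simp
next
  case (2 x y) then have "{u,v} = hE x y" by (simp add: hE_def insert_commute)
  then show ?thesis using assms(1) 2 by auto
next
  case (3 x y) then have "{u,v} = vE x y" by (simp add: vE_def)
  then show ?thesis using assms(1) 3 by simp
next
  case (4 x y) then have "{u,v} = vE x y" by (simp add: vE_def insert_commute)
  then show ?thesis using assms(1) 4 by auto
qed



definition walkadj :: "(int\<times>int) list \<Rightarrow> bool" where
  "walkadj p \<longleftrightarrow> (\<forall>t. Suc t < length p \<longrightarrow> adj (p!t) (p!Suc t))"

definition cntW :: "(int\<times>int) list \<Rightarrow> (int\<times>int) set \<Rightarrow> nat" where
  "cntW p e = card {t \<in> {..<length p - 1}. {p!t, p!Suc t} = e}"

definition NW :: "(int\<times>int) list \<Rightarrow> int \<Rightarrow> int \<Rightarrow> nat" where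
  "NW p i j = card {t \<in> {..<length p - 1}. \<exists>k>j. {p!t, p!Suc t} = hE i k}"

lemma NV: "NW p i j = NW p i (j+1) + cntW p (hE i (j+1))"
proof -
  let ?m = "length p - 1"
  have "{t \<in> {..<?m}. \<exists>k>j. {p!t, p!Suc t} = hE i k} =
     {t \<in> {..<?m}. \<exists>k>j+1. {p!t, p!Suc t} = hE i k} \<union> {t \<in> {..<?m}. {p!t, p!Suc t} = hE i (j+1)}"
    (is "?A = ?B \<union> ?C")
  proof (intro set_eqI iffI)
    fix t assume "t \<in> ?A"
    then obtain k where "k > j" "{p!t, p!Suc t} = hE i k" "t < ?m" by auto
    then show "t \<in> ?B \<union> ?C" by (cases "k = j+1") auto
  next
    fix t assume "t \<in> ?B \<union> ?C" then show "t \<in> ?A" by (auto intro: less_trans)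
  qed
  moreover have "?B \<inter> ?C = {}" by auto
  ultimately show ?thesis unfolding NW_def cntW_def by (simp add: card_Un_disjoint)
qed

lemma cnt0: assumes "x \<notin> set p" "x \<in> e" shows "cntW p e = 0"
proof -
  have "{t \<in> {..<length p - 1}. {p!t, p!Suc t} = e} = {}"
  proof (rule ccontr)
    assume "{t \<in> {..<length p - 1}. {p!t, p!Suc t} = e} \<noteq> {}"
    then obtain t where t: "t < length p - 1" "{p!t, p!Suc t} = e" by auto
    then have "x = p!t \<or> x = p!Suc t" using assms(2) by auto
    moreover have "p!t \<in> set p" "p!Suc t \<in> set p" using t by auto
    ultimately show False using assms(1) by auto
  qed
  then show ?thesis unfolding cntW_def by simp
qed

lemma card_sum_int: "int (card {t \<in> {..<m::nat}. P t}) = (\<Sum>t<m. of_bool (P t))"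
proof -
  have "card {t \<in> {..<m}. P t} = (\<Sum>t\<in>{t \<in> {..<m}. P t}. 1)" by simp
  also have "\<dots> = (\<Sum>t<m. if P t then 1 else 0)" using sum.inter_filter[of "{..<m}" "\<lambda>_. 1::nat" P] by simp
  finally show ?thesis by (simp add: of_nat_sum of_bool_def) (intro sum.cong refl, simp)
qed

lemma pair_hv:
  assumes "adj u v"
  obtains x y where "{u,v} = hE x y" "{fst u, fst v} = {x, x+1}" "snd u = y" "snd v = y"
   | x y where "{u,v} = vE x y" "fst u = x" "fst v = x" "{snd u, snd v} = {y, y+1}"
  using assms
proof (cases rule: adj_cases)
  case (1 x y) then show ?thesis using that(1)[of x y] by (simp add: hE_def)
next
  case (2 x y) then show ?thesis using that(1)[of x y] by (simp add: hE_def insert_commute)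
next
  case (3 x y) then show ?thesis using that(2)[of x y] by (simp add: vE_def)
next
  case (4 x y) then show ?thesis using that(2)[of x y] by (simp add: vE_def insert_commute)
qed

lemma step_par:
  fixes i j :: int
  assumes "adj u v"
  shows "even (of_bool (\<exists>k>j. {u,v} = hE i k) + of_bool (\<exists>k>j. {u,v} = hE (i+1) k)
     + of_bool ({u,v} = vE (i+1) j) + of_bool (fst u = i+1 \<and> snd u > j)
     + of_bool (fst v = i+1 \<and> snd v > j) :: int)"
  using assms
proof (cases rule: pair_hv)
  case (1 x y)
  have "(fst u = x \<and> fst v = x+1) \<or> (fst u = x+1 \<and> fst v = x)" using 1(2) by (auto simp: doubleton_eq_iff)
  then show ?thesis unfolding 1(1) using 1(3,4)
    by (elim disjE; cases "x = i"; cases "x = i+1"; cases "j < y") auto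
next
  case (2 x y)
  have "(snd u = y \<and> snd v = y+1) \<or> (snd u = y+1 \<and> snd v = y)" using 2(4) by (auto simp: doubleton_eq_iff)
  then show ?thesis unfolding 2(1) using 2(2,3)
    by (elim disjE; cases "x = i+1"; cases "j < y"; cases "j = y") auto
qed

lemma NH:
  assumes w: "walkadj p" and ne: "p \<noteq> []" and cl: "hd p = last p"
  shows "even (int (NW p i j) + int (NW p (i+1) j) + int (cntW p (vE (i+1) j)))"
proof -
  define m where "m = length p - 1"
  define phi where "phi w = (of_bool (fst w = i+1 \<and> snd w > j) :: int)" for w
  define a where "a t = (of_bool (\<exists>k>j. {p!t, p!Suc t} = hE i k) :: int)" for t
  define b where "b t = (of_bool (\<exists>k>j. {p!t, p!Suc t} = hE (i+1) k) :: int)" for t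
  define c where "c t = (of_bool ({p!t, p!Suc t} = vE (i+1) j) :: int)" for t
  have "even (\<Sum>t<m. a t + b t + c t + phi (p!t) + phi (p!Suc t))"
  proof (rule dvd_sum)
    fix t assume "t \<in> {..<m}"
    then have "adj (p!t) (p!Suc t)" using w unfolding walkadj_def m_def by auto
    then show "2 dvd (a t + b t + c t + phi (p!t) + phi (p!Suc t))"
      unfolding a_def b_def c_def phi_def by (rule step_par)
  qed
  moreover have "(\<Sum>t<m. phi (p!Suc t)) = (\<Sum>t<m. phi (p!t))"
  proof -
    have "p!0 = p!m" using ne cl unfolding m_def by (simp add: hd_conv_nth last_conv_nth)
    have "phi (p!0) + (\<Sum>t<m. phi (p!Suc t)) = (\<Sum>t<Suc m. phi (p!t))"
      by (rule sum.lessThan_Suc_shift[symmetric])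
    also have "\<dots> = (\<Sum>t<m. phi (p!t)) + phi (p!m)" by simp
    finally show ?thesis using \<open>p!0 = p!m\<close> by simp
  qed
  ultimately have "even (((\<Sum>t<m. a t) + (\<Sum>t<m. b t) + (\<Sum>t<m. c t)) + 2 * (\<Sum>t<m. phi (p!t)))"
    by (simp add: sum.distrib algebra_simps)
  then have "even ((\<Sum>t<m. a t) + (\<Sum>t<m. b t) + (\<Sum>t<m. c t))"
    using dvd_add_left_iff[of 2 "2 * (\<Sum>t<m. phi (p!t))"] by simp
  moreover have "int (NW p i j) = (\<Sum>t<m. a t)" "int (NW p (i+1) j) = (\<Sum>t<m. b t)"
    "int (cntW p (vE (i+1) j)) = (\<Sum>t<m. c t)"
    unfolding NW_def cntW_def a_def b_def c_def m_def by (simp_all only: card_sum_int)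
  ultimately show ?thesis by metis
qed



lemma lc_walk:
  assumes "lattice_connected S" "x \<in> S" "y \<in> S"
  shows "\<exists>p. p \<noteq> [] \<and> hd p = x \<and> last p = y \<and> set p \<subseteq> S \<and> walkadj p"
proof -
  obtain p where p: "p \<noteq> []" "hd p = x" "last p = y" "set p \<subseteq> S"
    "\<forall>i. Suc i < length p \<longrightarrow> {p ! i, p ! Suc i} \<in> {e \<in> E2. e \<subseteq> S}"
    using assms unfolding lattice_connected_def graph_connected_def by blast
  then have "walkadj p" unfolding walkadj_def using adj_E2 by blast
  then show ?thesis using p by blast
qed

lemma adj_nbrs: "adj (x,y) q \<Longrightarrow> q = (x+1,y) \<or> q = (x-1,y) \<or> q = (x,y+1) \<or> q = (x,y-1)"
  by (cases rule: adj_cases) auto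

lemma gs_adj:
  assumes W: "walkadj W" "W \<noteq> []" "hd W = last W" and a: "adj u v" and nu: "u \<notin> set W" and nv: "v \<notin> set W"
  shows "odd (NW W (fst u) (snd u)) = odd (NW W (fst v) (snd v))"
  using a
proof (cases rule: adj_cases)
  case (1 x y)
  have "cntW W (vE (x+1) y) = 0" using nv 1 by (intro cnt0[of v]) (auto simp: vE_def)
  then show ?thesis using NH[OF W, of x y] 1 by simp
next
  case (2 x y)
  have "cntW W (vE (x+1) y) = 0" using nu 2 by (intro cnt0[of u]) (auto simp: vE_def)
  then show ?thesis using NH[OF W, of x y] 2 by simp
next
  case (3 x y)
  have "cntW W (hE x (y+1)) = 0" using nv 3 by (intro cnt0[of v]) (auto simp: hE_def)
  then show ?thesis using NV[of W x y] 3 by simp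
next
  case (4 x y)
  have "cntW W (hE x (y+1)) = 0" using nu 4 by (intro cnt0[of u]) (auto simp: hE_def)
  then show ?thesis using NV[of W x y] 4 by simp
qed

lemma cnt_closing:
  assumes P: "P \<noteq> []" "last P = a" "set P \<subseteq> S" and abc: "a \<in> S" "c \<in> S" "b \<notin> S" "a \<noteq> c"
  shows "cntW (P @ [b,c]) {a,b} = 1" "cntW (P @ [b,c]) {b,c} = 1"
proof -
  let ?W = "P @ [b,c]"
  define n where "n = length P"
  have n1: "n \<ge> 1" using P by (simp add: n_def Suc_le_eq)
  have lw: "length ?W - 1 = n + 1" by (simp add: n_def)
  have Wn1: "?W ! (n-1) = a" using P n1 by (simp add: n_def nth_append last_conv_nth)
  have Wn: "?W ! n = b" by (simp add: n_def nth_append)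
  have Wn2: "?W ! Suc n = c" by (simp add: n_def nth_append)
  have inS: "?W ! t \<in> S \<and> ?W ! Suc t \<in> S" if "Suc t < n" for t
  proof -
    have "P ! t \<in> set P" "P ! Suc t \<in> set P" using that by (auto simp: n_def)
    then show ?thesis using that P by (auto simp: n_def nth_append)
  qed
  have cases3: "Suc t < n \<or> t = n - 1 \<or> t = n" if "t < n + 1" for t using that n1 by linarith
  have "{t \<in> {..<length ?W - 1}. {?W!t, ?W!Suc t} = {a,b}} = {n-1}"
  proof (intro set_eqI iffI)
    fix t assume t: "t \<in> {t \<in> {..<length ?W - 1}. {?W!t, ?W!Suc t} = {a,b}}"
    then have "t < n+1" using lw by simp
    then consider "Suc t < n" | "t = n-1" | "t = n" using cases3 by blast
    then show "t \<in> {n-1}"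
    proof cases
      case 1 then show ?thesis using inS[of t] t abc by (auto simp: doubleton_eq_iff)
    next
      case 2 then show ?thesis by simp
    next
      case 3 then show ?thesis using t Wn Wn2 abc by (auto simp: doubleton_eq_iff)
    qed
  next
    fix t assume "t \<in> {n-1}"
    then show "t \<in> {t \<in> {..<length ?W - 1}. {?W!t, ?W!Suc t} = {a,b}}"
      using lw Wn1 Wn n1 by auto
  qed
  then show "cntW ?W {a,b} = 1" unfolding cntW_def by simp
  have "{t \<in> {..<length ?W - 1}. {?W!t, ?W!Suc t} = {b,c}} = {n}"
  proof (intro set_eqI iffI)
    fix t assume t: "t \<in> {t \<in> {..<length ?W - 1}. {?W!t, ?W!Suc t} = {b,c}}"
    then have "t < n+1" using lw by simp
    then consider "Suc t < n" | "t = n-1" | "t = n" using cases3 by blast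
    then show "t \<in> {n}"
    proof cases
      case 1 then show ?thesis using inS[of t] t abc by (auto simp: doubleton_eq_iff)
    next
      case 2 then show ?thesis using t Wn1 n1 abc by (auto simp: doubleton_eq_iff)
    next
      case 3 then show ?thesis by simp
    qed
  next
    fix t assume "t \<in> {n}"
    then show "t \<in> {t \<in> {..<length ?W - 1}. {?W!t, ?W!Suc t} = {b,c}}"
      using lw Wn Wn2 by auto
  qed
  then show "cntW ?W {b,c} = 1" unfolding cntW_def by simp
qed

lemma no_checker:
  assumes cS: "lattice_connected S" and cC: "lattice_connected (-S)"
    and aS: "(i,j) \<in> S" and cS': "(i+1,j+1) \<in> S" and bN: "(i+1,j) \<notin> S" and dN: "(i,j+1) \<notin> S"
  shows False
proof -
  define a where "a = (i,j)"
  define b where "b = (i+1,j)"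
  define c where "c = (i+1,j+1)"
  define d where "d = (i,j+1)"
  obtain P where P: "P \<noteq> []" "hd P = c" "last P = a" "set P \<subseteq> S" "walkadj P"
    using lc_walk[OF cS, of c a] aS cS' unfolding a_def c_def by blast
  obtain Q where Q: "Q \<noteq> []" "hd Q = b" "last Q = d" "set Q \<subseteq> -S" "walkadj Q"
    using lc_walk[OF cC, of b d] bN dN unfolding b_def d_def by auto
  define W where "W = P @ [b,c]"
  have ac: "a \<noteq> c" unfolding a_def c_def by simp
  have cnt1: "cntW W {a,b} = 1" "cntW W {b,c} = 1"
    using cnt_closing[OF P(1,3,4), of c b] aS cS' bN ac unfolding W_def a_def b_def c_def by auto
  have Wne: "W \<noteq> []" and Wcl: "hd W = last W" using P unfolding W_def by auto
  have Wwalk: "walkadj W"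
  proof -
    have "adj a b" "adj b c" unfolding a_def b_def c_def adj_def by auto
    have "adj (W!t) (W!Suc t)" if tl: "Suc t < length W" for t
    proof -
      consider "Suc t < length P" | "Suc t = length P" | "t = length P" using tl unfolding W_def by force
      then show ?thesis
      proof cases
        case 1 then show ?thesis using P(5) unfolding walkadj_def W_def by (simp add: nth_append)
      next
        case 2
        then have "t = length P - 1" by simp
        then have "W!t = a" "W!Suc t = b" using P(1,3) 2 unfolding W_def
          by (auto simp: nth_append last_conv_nth)
        then show ?thesis using \<open>adj a b\<close> by simp
      next
        case 3 then show ?thesis using \<open>adj b c\<close> unfolding W_def by (simp add: nth_append)
      qed
    qed
    then show ?thesis unfolding walkadj_def by blast
  qed
  have setW: "set W = set P \<union> {b,c}" unfolding W_def by auto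
  have notW: "x \<notin> set W" if "x \<notin> S" "x \<noteq> b" for x
    using that P(4) cS' unfolding setW c_def by auto
  define G where "G v = odd (NW W (fst v) (snd v))" for v
  have dW: "d \<notin> set W" using notW dN unfolding d_def b_def by simp
  have "cntW W (hE i (j+1)) = 0" using dW by (intro cnt0[of d]) (auto simp: hE_def d_def)
  then have Gda: "G d = G a" using NV[of W i j] unfolding G_def a_def d_def by simp
  define K where "K = {t. t < length Q \<and> Q!t = b}"
  define k where "k = Max K"
  have finK: "finite K" unfolding K_def by simp
  have "0 \<in> K" using Q unfolding K_def by (simp add: hd_conv_nth)
  then have kK: "k \<in> K" and kmax: "\<And>t. t \<in> K \<Longrightarrow> t \<le> k" using finK unfolding k_def
    by (auto intro: Max_in Max_ge)
  have db: "d \<noteq> b" unfolding d_def b_def by simp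
  have lastQ: "Q ! (length Q - 1) = d" using Q by (simp add: last_conv_nth)
  have "k \<noteq> length Q - 1" using kK lastQ db unfolding K_def by auto
  then have kl: "k + 1 \<le> length Q - 1" using kK unfolding K_def by auto
  have QnotW: "Q!t \<notin> set W" if "k < t" "t < length Q" for t
  proof -
    have "Q!t \<in> set Q" using that by simp
    then have "Q!t \<notin> S" using Q(4) by auto
    moreover have "Q!t \<noteq> b" using kmax[of t] that unfolding K_def by auto
    ultimately show ?thesis using notW by blast
  qed
  define L where "L = length Q - 1"
  have Lq: "L < length Q" using Q(1) unfolding L_def by simp
  have Gm: "G (Q!(L - m)) = G d" if "m \<le> L - (k+1)" for m
    using that
  proof (induct m)
    case 0 then show ?case using lastQ unfolding L_def by simp
  next
    case (Suc m)
    define t where "t = L - Suc m"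
    have t1: "Suc t = L - m" "k < t" "Suc t < length Q" using Suc.prems kl Lq unfolding t_def L_def by auto
    have "adj (Q!t) (Q!Suc t)" using Q(5) t1(3) unfolding walkadj_def by blast
    moreover have "Q!t \<notin> set W" using t1 by (intro QnotW) auto
    moreover have "Q!Suc t \<notin> set W" using t1 by (intro QnotW) auto
    ultimately have "G (Q!t) = G (Q!Suc t)" unfolding G_def by (rule gs_adj[OF Wwalk Wne Wcl])
    then show ?case using Suc t1 unfolding t_def by simp
  qed
  have Gconst: "G (Q!(k+1)) = G d" using Gm[of "L - (k+1)"] kl unfolding L_def by simp
  define q where "q = Q ! (k+1)"
  have Gq: "G q = G a" using Gconst Gda unfolding q_def by simp
  have qW: "q \<notin> set W" unfolding q_def using QnotW kl by auto
  have qS: "q \<notin> S" using Q(4) kl unfolding q_def by (auto dest!: subsetD[of _ _ "Q!(k+1)"])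
  have "adj (Q!k) (Q!Suc k)" using Q(5) kl unfolding walkadj_def by auto
  then have "adj b q" using kK unfolding K_def q_def by simp
  then have "q = (i+2,j) \<or> q = (i,j) \<or> q = (i+1,j+1) \<or> q = (i+1,j-1)"
    using adj_nbrs[of "i+1" j q] unfolding b_def by auto
  then have "q = (i+2,j) \<or> q = (i+1,j-1)" using qS aS cS' by auto
  then show False
  proof
    assume q: "q = (i+2,j)"
    have c1: "cntW W (vE (i+1) j) = 1" using cnt1(2) unfolding vE_def b_def c_def by simp
    have c0: "cntW W (vE (i+2) j) = 0" using qW by (intro cnt0[of q]) (auto simp: vE_def q)
    have "even (int (NW W i j) + int (NW W (i+1) j) + int (cntW W (vE (i+1) j)))" by (rule NH[OF Wwalk Wne Wcl])
    moreover have "even (int (NW W (i+1) j) + int (NW W (i+2) j) + int (cntW W (vE (i+2) j)))"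
    proof -
      have e: "i+1+1 = i+2" by simp
      show ?thesis using NH[OF Wwalk Wne Wcl, of "i+1" j] unfolding e .
    qed
    ultimately have "odd (NW W i j) \<noteq> odd (NW W (i+2) j)" using c1 c0 by simp
    then show False using Gq unfolding G_def q a_def by simp
  next
    assume q: "q = (i+1,j-1)"
    have c1: "cntW W (hE i j) = 1" using cnt1(1) unfolding hE_def a_def b_def by simp
    have c0: "cntW W (vE (i+1) (j-1)) = 0" using qW by (intro cnt0[of q]) (auto simp: vE_def q)
    have "even (int (NW W i (j-1)) + int (NW W (i+1) (j-1)) + int (cntW W (vE (i+1) (j-1))))" by (rule NH[OF Wwalk Wne Wcl])
    moreover have "NW W i (j-1) = NW W i j + cntW W (hE i j)" using NV[of W i "j-1"] by simp
    ultimately have "odd (NW W i j) \<noteq> odd (NW W (i+1) (j-1))" using c1 c0 by simp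
    then show False using Gq unfolding G_def q a_def by simp
  qed
qed



lemma adj_symI: "adj u v \<Longrightarrow> adj v u" using adj_sym by blast

lemma F_mem: "{u,v} \<in> edge_boundary V \<longleftrightarrow> adj u v \<and> ((u \<in> V) \<noteq> (v \<in> V))"
proof
  assume "{u,v} \<in> edge_boundary V"
  then obtain x y where "{u,v} = {x,y}" "{x,y} \<in> E2" "x \<in> V" "y \<notin> V"
    unfolding edge_boundary_def by blast
  then have "adj x y" "x \<in> V" "y \<notin> V" "(u = x \<and> v = y) \<or> (u = y \<and> v = x)" by (auto simp: adj_E2 doubleton_eq_iff)
  then show "adj u v \<and> ((u \<in> V) \<noteq> (v \<in> V))" using adj_symI by blast
next
  assume a: "adj u v \<and> ((u \<in> V) \<noteq> (v \<in> V))"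
  show "{u,v} \<in> edge_boundary V"
  proof (cases "u \<in> V")
    case True then show ?thesis using a adj_E2 unfolding edge_boundary_def by blast
  next
    case False
    then have "{v,u} \<in> E2" "v \<in> V" "u \<notin> V" using a adj_E2 adj_symI by auto
    moreover have "{u,v} = {v,u}" by (simp add: insert_commute)
    ultimately show ?thesis unfolding edge_boundary_def mem_Collect_eq
      by (intro exI[of _ v] exI[of _ u]) simp
  qed
qed

lemma F_E2: "edge_boundary V \<subseteq> E2"
  unfolding edge_boundary_def by auto

lemma card_Int_insert: "finite S \<Longrightarrow> e \<notin> S \<Longrightarrow> card (X \<inter> insert e S) = of_bool (e \<in> X) + card (X \<inter> S)"
  by (cases "e \<in> X") (auto simp: Int_insert_right)

lemma sqE_ij: "sqE (i,j) = {hE i j, vE (i+1) j, hE i (j+1), vE i j}" by (simp add: sqE_def)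

lemma sqE_card: "card (X \<inter> sqE (i,j)) = of_bool (hE i j \<in> X) + of_bool (vE (i+1) j \<in> X) + of_bool (hE i (j+1) \<in> X) + of_bool (vE i j \<in> X)"
proof -
  have "card (X \<inter> sqE (i,j)) = of_bool (hE i j \<in> X) + card (X \<inter> {vE (i+1) j, hE i (j+1), vE i j})"
    unfolding sqE_ij by (rule card_Int_insert) auto
  also have "card (X \<inter> {vE (i+1) j, hE i (j+1), vE i j}) = of_bool (vE (i+1) j \<in> X) + card (X \<inter> {hE i (j+1), vE i j})"
    by (rule card_Int_insert) auto
  also have "card (X \<inter> {hE i (j+1), vE i j}) = of_bool (hE i (j+1) \<in> X) + card (X \<inter> {vE i j})"
    by (rule card_Int_insert) auto
  also have "card (X \<inter> {vE i j}) = of_bool (vE i j \<in> X)" by auto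
  finally show ?thesis by simp
qed

lemma hE_F: "hE i j \<in> edge_boundary V \<longleftrightarrow> ((i,j) \<in> V) \<noteq> ((i+1,j) \<in> V)"
  unfolding hE_def F_mem adj_def by simp
lemma vE_F: "vE i j \<in> edge_boundary V \<longleftrightarrow> ((i,j) \<in> V) \<noteq> ((i,j+1) \<in> V)"
  unfolding vE_def F_mem adj_def by simp

lemma walk_const:
  assumes "p \<noteq> []" "\<forall>t. Suc t < length p \<longrightarrow> g (p!t) = g (p!Suc t)"
  shows "g (hd p) = g (last p)"
proof -
  have *: "t < length p \<Longrightarrow> g (p!t) = g (p!0)" for t
  proof (induct t)
    case 0 then show ?case by simp
  next
    case (Suc t)
    then have "g (p!t) = g (p!Suc t)" using assms(2) by blast
    then show ?case using Suc by simp
  qed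
  have "g (p!(length p - 1)) = g (p!0)" using assms(1) by (intro *) simp
  then show ?thesis using assms(1) by (simp add: hd_conv_nth last_conv_nth)
qed

lemma rtranclp_walk:
  assumes "(\<lambda>x y. {x,y} \<in> Fs)\<^sup>*\<^sup>* x y" "x \<in> \<Union>Fs"
  shows "\<exists>p. p \<noteq> [] \<and> hd p = x \<and> last p = y \<and> set p \<subseteq> \<Union>Fs \<and> (\<forall>i. Suc i < length p \<longrightarrow> {p!i, p!Suc i} \<in> Fs)"
  using assms
proof (induct rule: converse_rtranclp_induct)
  case base
  then show ?case by (intro exI[of _ "[y]"]) auto
next
  case (step x z)
  then have "z \<in> \<Union>Fs" by blast
  then obtain p where p: "p \<noteq> []" "hd p = z" "last p = y" "set p \<subseteq> \<Union>Fs" "\<forall>i. Suc i < length p \<longrightarrow> {p!i, p!Suc i} \<in> Fs"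
    using step by blast
  have "\<forall>i. Suc i < length (x#p) \<longrightarrow> {(x#p)!i, (x#p)!Suc i} \<in> Fs"
  proof (intro allI impI)
    fix i assume "Suc i < length (x#p)"
    then show "{(x#p)!i, (x#p)!Suc i} \<in> Fs"
      using p step(1) by (cases i) (auto simp: hd_conv_nth)
  qed
  then show ?case using p step by (intro exI[of _ "x#p"]) auto
qed

lemma rtranclp_sym_aux:
  assumes "(\<lambda>x y. {x,y} \<in> Fs)\<^sup>*\<^sup>* x y" shows "(\<lambda>x y. {x,y} \<in> Fs)\<^sup>*\<^sup>* y x"
  using assms
proof (induct rule: rtranclp_induct)
  case base then show ?case by simp
next
  case (step y z)
  then have "{z,y} \<in> Fs" by (simp add: insert_commute)
  then show ?case using step(3) by (simp add: converse_rtranclp_into_rtranclp)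
qed

lemma seg:
  fixes f :: "int \<Rightarrow> int\<times>int"
  assumes "\<forall>k. m \<le> k \<and> k < n \<longrightarrow> (f k \<in> V \<longleftrightarrow> f (k+1) \<in> V)" "m \<le> n"
  shows "f m \<in> V \<longleftrightarrow> f n \<in> V"
  using assms(2,1)
proof (induct n rule: int_ge_induct)
  case base then show ?case by simp
next
  case (step i) then show ?case by force
qed

lemma seg2:
  fixes f :: "int \<Rightarrow> int\<times>int"
  assumes "\<forall>k. min m n \<le> k \<and> k < max m n \<longrightarrow> (f k \<in> V \<longleftrightarrow> f (k+1) \<in> V)"
  shows "f m \<in> V \<longleftrightarrow> f n \<in> V"
proof (cases "m \<le> n")
  case True then show ?thesis using seg[of m n f V] assms by auto
next
  case False then show ?thesis using seg[of n m f V] assms by auto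
qed



lemma F_infinite:
  assumes iV: "infinite V" and iC: "infinite (-V)"
  shows "infinite (edge_boundary V)"
proof
  assume fin: "finite (edge_boundary V)"
  define B where "B = \<Union>(edge_boundary V)"
  have "finite e" if "e \<in> edge_boundary V" for e
  proof -
    have "e \<in> E2" using that F_E2 by blast
    then show ?thesis by (cases rule: E2_cases) (auto simp: hE_def vE_def)
  qed
  then have finB: "finite B" unfolding B_def using fin by blast
  define R where "R = Max (insert 0 ((\<lambda>p. max \<bar>fst p\<bar> \<bar>snd p\<bar>) ` B))"
  have R0: "R \<ge> 0" unfolding R_def using finB by simp
  have bound: "\<bar>fst p\<bar> \<le> R \<and> \<bar>snd p\<bar> \<le> R" if "p \<in> B" for p
  proof -
    have "max \<bar>fst p\<bar> \<bar>snd p\<bar> \<le> R" unfolding R_def using finB that by (intro Max_ge) auto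
    then show ?thesis by simp
  qed
  define out where "out p \<longleftrightarrow> R < \<bar>fst p\<bar> \<or> R < \<bar>snd p\<bar>" for p :: "int\<times>int"
  have key: "(u \<in> V) = (v \<in> V)" if "adj u v" "out u" for u v
  proof (rule ccontr)
    assume "(u \<in> V) \<noteq> (v \<in> V)"
    then have "{u,v} \<in> edge_boundary V" using that F_mem by blast
    then have "u \<in> B" unfolding B_def by blast
    then show False using bound[of u] that(2) unfolding out_def by auto
  qed
  define z0 where "z0 = (R+1, R+1)"
  have vert: "((x,m) \<in> V) = ((x,n) \<in> V)" if "R < \<bar>x\<bar>" for x m n
    by (rule seg2[of m n "\<lambda>k. (x,k)" V]) (use that in \<open>auto intro!: key simp: adj_def out_def\<close>)
  have horiz: "((m,y) \<in> V) = ((n,y) \<in> V)" if "R < \<bar>y\<bar>" for y m n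
    by (rule seg2[of m n "\<lambda>k. (k,y)" V]) (use that in \<open>auto intro!: key simp: adj_def out_def\<close>)
  have claim: "(p \<in> V) = (z0 \<in> V)" if "out p" for p
  proof -
    obtain x y where p: "p = (x,y)" by (cases p)
    have R1: "R < \<bar>R+1\<bar>" using R0 by simp
    show ?thesis
    proof (cases "R < \<bar>x\<bar>")
      case True
      then have "((x,y) \<in> V) = ((x,R+1) \<in> V)" by (rule vert)
      also have "\<dots> = ((R+1,R+1) \<in> V)" using R1 by (rule horiz)
      finally show ?thesis unfolding p z0_def .
    next
      case False
      then have "R < \<bar>y\<bar>" using that p unfolding out_def by auto
      then have "((x,y) \<in> V) = ((R+1,y) \<in> V)" by (rule horiz)
      also have "\<dots> = ((R+1,R+1) \<in> V)" using R1 by (rule vert)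
      finally show ?thesis unfolding p z0_def .
    qed
  qed
  have box: "finite {p. \<not> out p}"
  proof (rule finite_subset)
    show "{p. \<not> out p} \<subseteq> {-R..R} \<times> {-R..R}" unfolding out_def by auto
  qed auto
  obtain p where p: "p \<in> V" "out p"
  proof -
    have "\<not> V \<subseteq> {p. \<not> out p}" using iV box finite_subset by blast
    then show ?thesis using that by blast
  qed
  obtain q where q: "q \<notin> V" "out q"
  proof -
    have "\<not> -V \<subseteq> {p. \<not> out p}" using iC box finite_subset by blast
    then show ?thesis using that by blast
  qed
  show False using claim[OF p(2)] claim[OF q(2)] p(1) q(1) by simp
qed



lemma two_elem: "a \<in> {x,y} \<Longrightarrow> b \<in> {x,y} \<Longrightarrow> a \<noteq> b \<Longrightarrow> {a,b} = {x,y}" by auto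

theorem propositionA1:
  fixes V1 :: "(int \<times> int) set"
  assumes "infinite V1" and "lattice_connected V1"
    and "infinite (- V1)" and "lattice_connected (- V1)"
  defines "F \<equiv> edge_boundary V1"
  defines "Fs \<equiv> dual_edge ` F"
  defines "Ws \<equiv> \<Union> Fs"
  shows "graph_connected Ws Fs \<and> infinite Ws \<and> (\<forall>v\<in>Ws. graph_degree Fs v = 2)"
proof -
  have FE2: "F \<subseteq> E2" unfolding F_def by (rule F_E2)
  have injF: "inj_on dual_edge F" using dual_inj FE2 by (rule inj_on_subset)
  have infF: "infinite F" unfolding F_def using assms(1,3) by (rule F_infinite)
  have infW: "infinite Ws"
  proof
    assume "finite Ws"
    then have "finite (Pow Ws)" by simp
    moreover have "Fs \<subseteq> Pow Ws" unfolding Ws_def by blast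
    ultimately have "finite Fs" by (rule finite_subset[rotated])
    then show False using infF injF unfolding Fs_def by (simp add: finite_image_iff)
  qed
  have Wcen: "\<exists>s. w = cen s \<and> F \<inter> sqE s \<noteq> {}" if wW: "w \<in> Ws" for w
  proof -
    obtain f where f: "f \<in> F" "w \<in> dual_edge f" using wW unfolding Ws_def Fs_def by blast
    then obtain s where "w = cen s" "f \<in> sqE s" using dual_cen FE2 by blast
    then show ?thesis using f by blast
  qed
  have deg: "graph_degree Fs w = 2" if wW: "w \<in> Ws" for w
  proof -
    obtain s where s: "w = cen s" "F \<inter> sqE s \<noteq> {}" using Wcen[OF wW] by blast
    obtain i j where ij: "s = (i,j)" by (cases s)
    have "{e \<in> Fs. w \<in> e} = dual_edge ` (F \<inter> sqE s)"
    proof (intro set_eqI iffI)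
      fix e assume "e \<in> {e \<in> Fs. w \<in> e}"
      then obtain f where "f \<in> F" "e = dual_edge f" "cen s \<in> dual_edge f" using s unfolding Fs_def by auto
      then show "e \<in> dual_edge ` (F \<inter> sqE s)" using cen_dual_iff FE2 by blast
    next
      fix e assume "e \<in> dual_edge ` (F \<inter> sqE s)"
      then obtain f where "f \<in> F" "f \<in> sqE s" "e = dual_edge f" by blast
      then show "e \<in> {e \<in> Fs. w \<in> e}" using cen_dual_iff FE2 s unfolding Fs_def by blast
    qed
    then have "graph_degree Fs w = card (F \<inter> sqE s)" unfolding graph_degree_def
      using card_image[OF inj_on_subset[OF injF, of "F \<inter> sqE s"]] by simp
    also have "\<dots> = of_bool (((i,j) \<in> V1) \<noteq> ((i+1,j) \<in> V1)) + of_bool (((i+1,j) \<in> V1) \<noteq> ((i+1,j+1) \<in> V1))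
       + of_bool (((i,j+1) \<in> V1) \<noteq> ((i+1,j+1) \<in> V1)) + of_bool (((i,j) \<in> V1) \<noteq> ((i,j+1) \<in> V1))"
      (is "_ = ?c")
      unfolding F_def ij sqE_card hE_F vE_F by simp
    finally have dc: "graph_degree Fs w = ?c" .
    have "card (F \<inter> sqE s) \<noteq> 0" using s(2) by (simp add: sqE_def)
    then have c0: "?c \<noteq> 0" using dc \<open>graph_degree Fs w = card (F \<inter> sqE s)\<close> by simp
    have nc1: "\<not> ((i,j) \<in> V1 \<and> (i+1,j+1) \<in> V1 \<and> (i+1,j) \<notin> V1 \<and> (i,j+1) \<notin> V1)"
      using no_checker[OF assms(2), of i j] assms(4) by blast
    have nc2: "\<not> ((i,j) \<notin> V1 \<and> (i+1,j+1) \<notin> V1 \<and> (i+1,j) \<in> V1 \<and> (i,j+1) \<in> V1)"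
      using no_checker[OF assms(4), of i j] assms(2) by auto
    have "?c = 2" using c0 nc1 nc2
      by (cases "(i,j) \<in> V1"; cases "(i+1,j) \<in> V1"; cases "(i+1,j+1) \<in> V1"; cases "(i,j+1) \<in> V1") simp_all
    then show ?thesis using dc by simp
  qed
  define R where "R = (\<lambda>x y. {x,y} \<in> Fs)\<^sup>*\<^sup>*"
  have link: "R (cen s) (cen s')" if lk: "f \<in> F" "f \<in> sqE s" "f \<in> sqE s'" for f s s'
  proof -
    have fE: "f \<in> E2" using lk FE2 by blast
    have m: "cen s \<in> dual_edge f" "cen s' \<in> dual_edge f" using lk cen_dual_iff[OF fE] by auto
    obtain \<alpha> \<beta> where ab: "dual_edge f = {\<alpha>, \<beta>}" using dual_doubleton[OF fE] by blast
    have inF: "dual_edge f \<in> Fs" using lk unfolding Fs_def by blast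
    show ?thesis
    proof (cases "s = s'")
      case True then show ?thesis unfolding R_def by simp
    next
      case False
      then have ne: "cen s \<noteq> cen s'" using cen_eq by blast
      have "{cen s, cen s'} = dual_edge f" using two_elem[OF m[unfolded ab] ne] ab by simp
      then show ?thesis using inF unfolding R_def by (simp add: r_into_rtranclp)
    qed
  qed
  obtain e0 where e0: "e0 \<in> F" using infF by (metis finite.emptyI ex_in_conv)
  obtain s0 where s0: "e0 \<in> sqE s0"
  proof -
    have "e0 \<in> E2" using e0 FE2 by blast
    then show ?thesis
      by (cases rule: E2_cases) (auto intro: that[of "(_,_)"] simp: sqE_def)
  qed
  define A where "A = {f \<in> F. \<exists>s. f \<in> sqE s \<and> R (cen s0) (cen s)}"
  have Rtrans: "R x z" if "R x y" "R y z" for x y z using that unfolding R_def by simp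
  have sqA: "A \<inter> sqE s = (if R (cen s0) (cen s) then F \<inter> sqE s else {})" for s
  proof (cases "R (cen s0) (cen s)")
    case True
    have "A \<inter> sqE s = F \<inter> sqE s" unfolding A_def using True by blast
    then show ?thesis using True by simp
  next
    case False
    have "f \<notin> A" if "f \<in> sqE s" for f
    proof
      assume "f \<in> A"
      then obtain s' where "f \<in> F" "f \<in> sqE s'" "R (cen s0) (cen s')" unfolding A_def by blast
      then have "R (cen s0) (cen s)" using link[of f s' s] that Rtrans by blast
      then show False using False by simp
    qed
    then show ?thesis using False by auto
  qed
  have "\<exists>g::int\<times>int\<Rightarrow>bool. \<forall>x y. (hE x y \<in> A \<longleftrightarrow> g (x,y) \<noteq> g (x+1,y)) \<and> (vE x y \<in> A \<longleftrightarrow> g (x,y) \<noteq> g (x,y+1))"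
  proof (rule cobound)
    fix i j
    have "card (A \<inter> sqE (i,j)) = of_bool (hE i j \<in> A) + of_bool (vE (i+1) j \<in> A) + of_bool (hE i (j+1) \<in> A) + of_bool (vE i j \<in> A)"
      by (rule sqE_card)
    moreover have "even (card (A \<inter> sqE (i,j)))"
    proof (cases "R (cen s0) (cen (i,j))")
      case True
      then have "card (A \<inter> sqE (i,j)) = card (F \<inter> sqE (i,j))" using sqA[of "(i,j)"] by simp
      also have "\<dots> = of_bool (((i,j) \<in> V1) \<noteq> ((i+1,j) \<in> V1)) + of_bool (((i+1,j) \<in> V1) \<noteq> ((i+1,j+1) \<in> V1))
       + of_bool (((i,j+1) \<in> V1) \<noteq> ((i+1,j+1) \<in> V1)) + of_bool (((i,j) \<in> V1) \<noteq> ((i,j+1) \<in> V1))"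
        unfolding F_def sqE_card hE_F vE_F by simp
      finally show ?thesis
        by (cases "(i,j) \<in> V1"; cases "(i+1,j) \<in> V1"; cases "(i+1,j+1) \<in> V1"; cases "(i,j+1) \<in> V1") simp_all
    next
      case False then show ?thesis using sqA[of "(i,j)"] by simp
    qed
    moreover have "int (card (A \<inter> sqE (i,j))) = of_bool (hE i j \<in> A) + of_bool (hE i (j+1) \<in> A)
       + of_bool (vE i j \<in> A) + of_bool (vE (i+1) j \<in> A)"
      using sqE_card[of A i j] by simp
    ultimately show "even (of_bool (hE i j \<in> A) + of_bool (hE i (j+1) \<in> A)
       + of_bool (vE i j \<in> A) + of_bool (vE (i+1) j \<in> A) :: int)"
      by (metis even_of_nat)
  qed
  then obtain g :: "int\<times>int\<Rightarrow>bool" where g: "\<forall>x y. (hE x y \<in> A \<longleftrightarrow> g (x,y) \<noteq> g (x+1,y)) \<and> (vE x y \<in> A \<longleftrightarrow> g (x,y) \<noteq> g (x,y+1))"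
    by blast
  have gA: "{u,v} \<in> A \<longleftrightarrow> g u \<noteq> g v" if "adj u v" for u v using cobound_adj[OF g that] .
  have AsubF: "A \<subseteq> F" unfolding A_def by blast
  have gwalk: "g (hd p) = g (last p)" if "p \<noteq> []" "set p \<subseteq> S" "walkadj p" "S = V1 \<or> S = -V1" for p S
  proof (rule walk_const[OF that(1)], intro allI impI)
    fix t assume t: "Suc t < length p"
    then have ad: "adj (p!t) (p!Suc t)" using that(3) unfolding walkadj_def by blast
    have "p!t \<in> set p" "p!Suc t \<in> set p" using t by auto
    then have "p!t \<in> S" "p!Suc t \<in> S" using that(2) by auto
    then have "{p!t, p!Suc t} \<notin> F" unfolding F_def F_mem using that(4) by auto
    then have "{p!t, p!Suc t} \<notin> A" using AsubF by blast
    then show "g (p!t) = g (p!Suc t)" using gA[OF ad] by simp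
  qed
  have allA: "f \<in> A" if fF: "f \<in> F" for f
  proof (rule ccontr)
    assume fA: "f \<notin> A"
    have "R (cen s0) (cen s0)" unfolding R_def by simp
    then have e0A: "e0 \<in> A" unfolding A_def using e0 s0 by blast
    obtain x y where xy: "e0 = {x,y}" "x \<in> V1" "y \<notin> V1" using e0 unfolding F_def edge_boundary_def by blast
    obtain x' y' where xy': "f = {x',y'}" "x' \<in> V1" "y' \<notin> V1" using fF unfolding F_def edge_boundary_def by blast
    have "{x,y} \<in> edge_boundary V1" using e0 xy unfolding F_def by simp
    then have axy: "adj x y" using F_mem by blast
    have "{x',y'} \<in> edge_boundary V1" using fF xy' unfolding F_def by simp
    then have axy': "adj x' y'" using F_mem by blast
    obtain P where P: "P \<noteq> []" "hd P = x" "last P = x'" "set P \<subseteq> V1" "walkadj P"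
      using lc_walk[OF assms(2) xy(2) xy'(2)] by blast
    obtain Q where Q: "Q \<noteq> []" "hd Q = y" "last Q = y'" "set Q \<subseteq> -V1" "walkadj Q"
      using lc_walk[OF assms(4)] xy(3) xy'(3) by blast
    have "g x = g x'" using gwalk[OF P(1,4,5)] P(2,3) by simp
    moreover have "g y = g y'" using gwalk[OF Q(1,4,5)] Q(2,3) by simp
    moreover have "g x \<noteq> g y" using gA[OF axy] e0A xy by simp
    moreover have "g x' = g y'" using gA[OF axy'] fA xy' by simp
    ultimately show False by simp
  qed
  have Rall: "R (cen s0) w" if wW: "w \<in> Ws" for w
  proof -
    obtain f where f: "f \<in> F" "w \<in> dual_edge f" using wW unfolding Ws_def Fs_def by blast
    then obtain s where s: "w = cen s" "f \<in> sqE s" using dual_cen FE2 by blast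
    have "f \<in> A" by (rule allA[OF f(1)])
    then have "\<exists>s'. f \<in> sqE s' \<and> R (cen s0) (cen s')" unfolding A_def by (simp only: mem_Collect_eq)
    then obtain s' where s': "f \<in> sqE s'" "R (cen s0) (cen s')" by (elim exE conjE)
    have "R (cen s0) (cen s)" by (rule Rtrans[OF s'(2) link[OF f(1) s'(1) s(2)]])
    then show ?thesis unfolding s(1) .
  qed
  have conn: "graph_connected Ws Fs"
    unfolding graph_connected_def
  proof (intro ballI)
    fix x y assume x: "x \<in> Ws" and y: "y \<in> Ws"
    have "R x (cen s0)" using rtranclp_sym_aux[OF Rall[OF x, unfolded R_def]] unfolding R_def .
    then have "R x y" by (rule Rtrans[OF _ Rall[OF y]])
    then show "\<exists>p. p \<noteq> [] \<and> hd p = x \<and> last p = y \<and> set p \<subseteq> Ws \<and>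
        (\<forall>i. Suc i < length p \<longrightarrow> {p ! i, p ! Suc i} \<in> Fs)"
      using rtranclp_walk[of Fs x y] x unfolding R_def Ws_def by simp
  qed
  show ?thesis using conn infW deg by blast
qed


end
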